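(* Let $\alpha>1$, $\varepsilon>0$, $\delta\in(0,1)$, and let $\pi^*$ be the optimal partition selection primitive ($\pi^*(0)=0$, $\pi^*(n)=L(\pi^*(n-1))$ with $L(q)=\max\{p\in[q,1]: D^\delta_\alpha(\mathrm{Ber}(p)\|\mathrm{Ber}(q))\le\varepsilon\text{ and } D^\delta_\alpha(\mathrm{Ber}(q)\|\mathrm{Ber}(p))\le\varepsilon\}$). Then $\pi^*$ is non-decreasing, $n_d := \min\{n\in\mathbb{N}:\pi^*(n)=1\}$ is finite with $n_d\le\lceil1/\delta\rceil$, the function $\Pi(x) = \pi^*(n_d-x)-\pi^*(n_d-1-x)$ for $x\in\{0,\dots,n_d-1\}$ is a probability distribution, and with $\tau = n_d-1$ we have, for all $n\in\mathbb{Z}_{\ge0}$, $$\Pr_{Z\sim\Pi}(n+Z>\tau) = \pi^*(n).$$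
   Context: $\mathrm{Ber}(p)$: Bernoulli distribution. For $\alpha>1$, $D_\alpha(P\|Q)=\frac{1}{\alpha-1}\log\sum_x P(x)^\alpha Q(x)^{1-\alpha}$ and $D^\delta_\alpha(P\|Q)=\inf\{D_\alpha(P'\|Q'): P=(1-\delta)P'+\delta P'',\ Q=(1-\delta)Q'+\delta Q''\}$ over probability distributions. *)

theory Defs
  imports Complex_Main "HOL-Library.Extended_Real"
begin

text \<open>Probability distributions on the two-point space (the support of Bernoulli
  distributions). All distributions in the decomposition defining the approximate
  Renyi divergence are necessarily supported on this space.\<close>

definition is_pdist :: "(bool \<Rightarrow> real) \<Rightarrow> bool" where
  "is_pdist P \<longleftrightarrow> (\<forall>x. 0 \<le> P x) \<and> (\<Sum>x\<in>UNIV. P x) = 1"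

definition Ber :: "real \<Rightarrow> bool \<Rightarrow> real" where
  "Ber p = (\<lambda>x. if x then p else 1 - p)"

definition renyi :: "real \<Rightarrow> (bool \<Rightarrow> real) \<Rightarrow> (bool \<Rightarrow> real) \<Rightarrow> ereal" where
  "renyi \<alpha> P Q =
     (if (\<exists>x. P x > 0 \<and> Q x = 0) then \<infinity>
      else ereal (1 / (\<alpha> - 1) *
             ln (\<Sum>x\<in>{x. P x > 0}. P x powr \<alpha> * Q x powr (1 - \<alpha>))))"

definition renyi_approx :: "real \<Rightarrow> real \<Rightarrow> (bool \<Rightarrow> real) \<Rightarrow> (bool \<Rightarrow> real) \<Rightarrow> ereal" where
  "renyi_approx \<alpha> \<delta> P Q =
     Inf {renyi \<alpha> P' Q' | P' Q' P'' Q''.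
            is_pdist P' \<and> is_pdist Q' \<and> is_pdist P'' \<and> is_pdist Q'' \<and>
            (\<forall>x. P x = (1 - \<delta>) * P' x + \<delta> * P'' x) \<and>
            (\<forall>x. Q x = (1 - \<delta>) * Q' x + \<delta> * Q'' x)}"

definition Lstep :: "real \<Rightarrow> real \<Rightarrow> real \<Rightarrow> real \<Rightarrow> real" where
  "Lstep \<alpha> \<epsilon> \<delta> q =
     (GREATEST p. p \<in> {q..1} \<and>
        renyi_approx \<alpha> \<delta> (Ber p) (Ber q) \<le> ereal \<epsilon> \<and>
        renyi_approx \<alpha> \<delta> (Ber q) (Ber p) \<le> ereal \<epsilon>)"

fun pi_star :: "real \<Rightarrow> real \<Rightarrow> real \<Rightarrow> nat \<Rightarrow> real" where
  "pi_star \<alpha> \<epsilon> \<delta> 0 = 0"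
| "pi_star \<alpha> \<epsilon> \<delta> (Suc n) = Lstep \<alpha> \<epsilon> \<delta> (pi_star \<alpha> \<epsilon> \<delta> n)"

end

theory Submission
  imports Defs
begin

lemma my_closed_contains_Sup:
  fixes S :: "real set"
  assumes "closed S" "S \<noteq> {}" "bdd_above S"
  shows "Sup S \<in> S"
proof (rule ccontr)
  assume a: "Sup S \<notin> S"
  have "open (- S)" using assms(1) by auto
  then obtain e where e: "e > 0" "\<forall>y. dist y (Sup S) < e \<longrightarrow> y \<in> - S"
    using a unfolding open_dist by auto
  obtain x where x: "x \<in> S" "Sup S - e < x" using less_cSupE[of "Sup S - e" S] assms e by auto
  have "x \<le> Sup S" using cSup_upper[OF x(1) assms(3)] .
  then have "dist x (Sup S) < e" using x by (simp add: dist_real_def)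
  then show False using e x by auto
qed

definition KK :: "real \<Rightarrow> real \<Rightarrow> real \<Rightarrow> real" where
  "KK \<alpha> a b = a powr \<alpha> * b powr (1 - \<alpha>) + (1 - a) powr \<alpha> * (1 - b) powr (1 - \<alpha>)"

lemma sum_bool: "(\<Sum>x\<in>UNIV. f x) = f True + (f False :: real)"
  by (simp add: UNIV_bool)

lemma is_pdist_Ber: "0 \<le> r \<Longrightarrow> r \<le> 1 \<Longrightarrow> is_pdist (Ber r)"
  by (auto simp: is_pdist_def Ber_def sum_bool)

lemma pdist_Ber: assumes "is_pdist P" shows "P = Ber (P True)" "0 \<le> P True" "P True \<le> 1"
proof -
  have s: "P True + P False = 1" "0 \<le> P True" "0 \<le> P False" using assms by (auto simp: is_pdist_def sum_bool)
  show "P = Ber (P True)" unfolding Ber_def using s by (auto intro!: ext)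
  show "0 \<le> P True" "P True \<le> 1" using s by auto
qed

lemma renyi_Ber:
  assumes "0 \<le> a" "a \<le> 1" "0 \<le> b" "b \<le> 1"
  shows "renyi \<alpha> (Ber a) (Ber b) =
    (if (a > 0 \<and> b = 0) \<or> (a < 1 \<and> b = 1) then \<infinity> else ereal (1 / (\<alpha> - 1) * ln (KK \<alpha> a b)))"
proof -
  have ex: "(\<exists>x. Ber a x > 0 \<and> Ber b x = 0) \<longleftrightarrow> (a > 0 \<and> b = 0) \<or> (a < 1 \<and> b = 1)"
    by (auto simp: Ber_def)
  have "(\<Sum>x\<in>{x. Ber a x > 0}. Ber a x powr \<alpha> * Ber b x powr (1 - \<alpha>))
      = (\<Sum>x\<in>UNIV. if Ber a x > 0 then Ber a x powr \<alpha> * Ber b x powr (1 - \<alpha>) else 0)"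
    by (simp add: sum.If_cases)
  also have "\<dots> = KK \<alpha> a b"
    using assms by (auto simp: sum_bool Ber_def KK_def)
  finally show ?thesis unfolding renyi_def ex by simp
qed


lemma K_mono1:
  assumes al: "\<alpha> > 1" and b: "0 < b" "b < 1" and xy: "b \<le> x" "x \<le> y" "y \<le> 1"
  shows "KK \<alpha> x b \<le> KK \<alpha> y b"
proof -
  let ?c1 = "b powr (1 - \<alpha>)" and ?c2 = "(1 - b) powr (1 - \<alpha>)"
  have eq: "\<And>t. KK \<alpha> t b = t powr \<alpha> * ?c1 + (1 - t) powr \<alpha> * ?c2" by (simp add: KK_def)
  have "(\<lambda>t. t powr \<alpha> * ?c1 + (1 - t) powr \<alpha> * ?c2) x \<le> (\<lambda>t. t powr \<alpha> * ?c1 + (1 - t) powr \<alpha> * ?c2) y"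
  proof (rule DERIV_nonneg_imp_increasing_open[OF xy(2)])
    fix t assume t: "x < t" "t < y"
    then have t0: "0 < t" "t < 1" "b < t" using xy b by auto
    have D: "DERIV (\<lambda>t. t powr \<alpha> * ?c1 + (1 - t) powr \<alpha> * ?c2) t :>
       (\<alpha> * t powr (\<alpha> - 1) * ?c1 - \<alpha> * (1 - t) powr (\<alpha> - 1) * ?c2)"
      using t0 by (auto intro!: derivative_eq_intros simp: field_simps)
    have "1 \<le> (t / b) powr (\<alpha> - 1)" using t0 b al by (intro ge_one_powr_ge_zero) auto
    also have "(t / b) powr (\<alpha> - 1) = t powr (\<alpha> - 1) * ?c1"
      using b t0 powr_minus_divide[of b "\<alpha> - 1"] by (simp add: powr_divide)
    finally have 1: "1 \<le> t powr (\<alpha> - 1) * ?c1" .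
    have "((1 - t) / (1 - b)) powr (\<alpha> - 1) \<le> 1" using t0 b al by (intro powr_le1) auto
    also have "((1 - t) / (1 - b)) powr (\<alpha> - 1) = (1 - t) powr (\<alpha> - 1) * ?c2"
      using b t0 powr_minus_divide[of "1 - b" "\<alpha> - 1"] by (simp add: powr_divide)
    finally have 2: "(1 - t) powr (\<alpha> - 1) * ?c2 \<le> 1" .
    have "0 \<le> \<alpha> * (t powr (\<alpha> - 1) * ?c1) - \<alpha> * ((1 - t) powr (\<alpha> - 1) * ?c2)"
      using 1 2 al by (simp add: algebra_simps mult_left_mono)
    then show "\<exists>y. DERIV (\<lambda>t. t powr \<alpha> * ?c1 + (1 - t) powr \<alpha> * ?c2) t :> y \<and> 0 \<le> y"
      using D by (intro exI[of _ "\<alpha> * t powr (\<alpha> - 1) * ?c1 - \<alpha> * (1 - t) powr (\<alpha> - 1) * ?c2"])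
        (simp add: mult.assoc)
  next
    show "continuous_on {x..y} (\<lambda>t. t powr \<alpha> * ?c1 + (1 - t) powr \<alpha> * ?c2)"
      using xy b al by (intro continuous_intros continuous_on_powr') auto
  qed
  then show ?thesis by (simp add: eq)
qed

lemma K_mono2:
  assumes al: "\<alpha> > 1" and a: "0 < a" "a \<le> 1" and xy: "0 < x" "x \<le> y" "y < a"
  shows "KK \<alpha> a y \<le> KK \<alpha> a x"
proof -
  let ?c1 = "a powr \<alpha>" and ?c2 = "(1 - a) powr \<alpha>"
  have eq: "\<And>t. KK \<alpha> a t = ?c1 * t powr (1 - \<alpha>) + ?c2 * (1 - t) powr (1 - \<alpha>)" by (simp add: KK_def)
  have "(\<lambda>t. ?c1 * t powr (1 - \<alpha>) + ?c2 * (1 - t) powr (1 - \<alpha>)) x \<ge> (\<lambda>t. ?c1 * t powr (1 - \<alpha>) + ?c2 * (1 - t) powr (1 - \<alpha>)) y"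
  proof (rule DERIV_nonpos_imp_decreasing_open[OF xy(2)])
    fix t assume t: "x < t" "t < y"
    then have t0: "0 < t" "t < 1" "t < a" using xy a by auto
    have D: "DERIV (\<lambda>t. ?c1 * t powr (1 - \<alpha>) + ?c2 * (1 - t) powr (1 - \<alpha>)) t :>
       ((1 - \<alpha>) * (?c1 * t powr (- \<alpha>)) - (1 - \<alpha>) * (?c2 * (1 - t) powr (- \<alpha>)))"
      using t0 by (auto intro!: derivative_eq_intros simp: field_simps)
    have "1 \<le> (a / t) powr \<alpha>" using t0 a al by (intro ge_one_powr_ge_zero) auto
    also have "(a / t) powr \<alpha> = ?c1 * t powr (- \<alpha>)"
      using a t0 by (simp add: powr_divide powr_minus field_simps)
    finally have 1: "1 \<le> ?c1 * t powr (- \<alpha>)" .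
    have "((1 - a) / (1 - t)) powr \<alpha> \<le> 1" using t0 a al by (intro powr_le1) auto
    also have "((1 - a) / (1 - t)) powr \<alpha> = ?c2 * (1 - t) powr (- \<alpha>)"
      using a t0 by (simp add: powr_divide powr_minus field_simps)
    finally have 2: "?c2 * (1 - t) powr (- \<alpha>) \<le> 1" .
    have "(1 - \<alpha>) * (?c1 * t powr (- \<alpha>)) - (1 - \<alpha>) * (?c2 * (1 - t) powr (- \<alpha>)) \<le> 0"
    proof -
      have "(1 - \<alpha>) * (?c1 * t powr (- \<alpha>) - ?c2 * (1 - t) powr (- \<alpha>)) \<le> 0"
        using 1 2 al by (intro mult_nonpos_nonneg) auto
      then show ?thesis by (simp add: right_diff_distrib)
    qed
    then show "\<exists>y. DERIV (\<lambda>t. ?c1 * t powr (1 - \<alpha>) + ?c2 * (1 - t) powr (1 - \<alpha>)) t :> y \<and> y \<le> 0"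
      using D by blast
  next
    show "continuous_on {x..y} (\<lambda>t. ?c1 * t powr (1 - \<alpha>) + ?c2 * (1 - t) powr (1 - \<alpha>))"
      using xy a al by (intro continuous_intros continuous_on_powr') auto
  qed
  then show ?thesis by (simp add: eq)
qed


lemma KK_pos:
  assumes "0 \<le> a" "a \<le> 1" "0 \<le> b" "b \<le> 1" "\<not> ((a > 0 \<and> b = 0) \<or> (a < 1 \<and> b = 1))"
  shows "KK \<alpha> a b > 0"
proof (cases "a > 0")
  case True
  then have "b > 0" using assms by auto
  then have "a powr \<alpha> * b powr (1 - \<alpha>) > 0" using True by simp
  moreover have "(1 - a) powr \<alpha> * (1 - b) powr (1 - \<alpha>) \<ge> 0" by simp
  ultimately show ?thesis unfolding KK_def by linarith
next
  case False
  then have "a = 0" "b < 1" using assms by auto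
  then have "(1 - a) powr \<alpha> * (1 - b) powr (1 - \<alpha>) > 0" by simp
  moreover have "a powr \<alpha> * b powr (1 - \<alpha>) \<ge> 0" by simp
  ultimately show ?thesis unfolding KK_def by linarith
qed

lemma renyi_le_iff:
  assumes al: "\<alpha> > 1" and ab: "0 \<le> a" "a \<le> 1" "0 \<le> b" "b \<le> 1"
  shows "renyi \<alpha> (Ber a) (Ber b) \<le> ereal \<epsilon> \<longleftrightarrow>
     \<not> ((a > 0 \<and> b = 0) \<or> (a < 1 \<and> b = 1)) \<and> KK \<alpha> a b \<le> exp ((\<alpha> - 1) * \<epsilon>)"
proof (cases "(a > 0 \<and> b = 0) \<or> (a < 1 \<and> b = 1)")
  case True then show ?thesis using renyi_Ber[OF ab] by simp
next
  case False
  have K: "KK \<alpha> a b > 0" using KK_pos[OF ab False] .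
  have "1 / (\<alpha> - 1) * ln (KK \<alpha> a b) \<le> \<epsilon> \<longleftrightarrow> ln (KK \<alpha> a b) \<le> (\<alpha> - 1) * \<epsilon>"
    using al by (simp add: field_simps)
  also have "\<dots> \<longleftrightarrow> KK \<alpha> a b \<le> exp ((\<alpha> - 1) * \<epsilon>)"
    using K by (metis exp_le_cancel_iff exp_ln)
  finally show ?thesis using renyi_Ber[OF ab] False by simp
qed

lemma renyi_mono:
  assumes al: "\<alpha> > 1" and o: "0 \<le> b" "b \<le> b'" "b' < a'" "a' \<le> a" "a \<le> 1"
  shows "renyi \<alpha> (Ber a') (Ber b') \<le> renyi \<alpha> (Ber a) (Ber b)"
proof (cases "(a > 0 \<and> b = 0) \<or> (a < 1 \<and> b = 1)")
  case True then show ?thesis using renyi_Ber[of a b \<alpha>] o by simp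
next
  case False
  then have b: "0 < b" "b < 1" using o by auto
  have F2: "\<not> ((a' > 0 \<and> b' = 0) \<or> (a' < 1 \<and> b' = 1))" using o b by auto
  have "KK \<alpha> a' b' \<le> KK \<alpha> a' b" using K_mono2[OF al, of a' b b'] o b by auto
  also have "\<dots> \<le> KK \<alpha> a b" using K_mono1[OF al b, of a' a] o by auto
  finally have le: "KK \<alpha> a' b' \<le> KK \<alpha> a b" .
  have p: "KK \<alpha> a' b' > 0" using KK_pos F2 o by auto
  have "ln (KK \<alpha> a' b') \<le> ln (KK \<alpha> a b)" using le p by simp
  then have "1 / (\<alpha> - 1) * ln (KK \<alpha> a' b') \<le> 1 / (\<alpha> - 1) * ln (KK \<alpha> a b)"
    using al by (intro mult_left_mono) auto
  then show ?thesis using renyi_Ber[of a b \<alpha>] renyi_Ber[of a' b' \<alpha>] o False F2 by simp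
qed

lemma renyi_swap:
  assumes "0 \<le> a" "a \<le> 1" "0 \<le> b" "b \<le> 1"
  shows "renyi \<alpha> (Ber (1 - a)) (Ber (1 - b)) = renyi \<alpha> (Ber a) (Ber b)"
proof -
  have "KK \<alpha> (1 - a) (1 - b) = KK \<alpha> a b" by (simp add: KK_def)
  then show ?thesis using renyi_Ber[of a b \<alpha>] renyi_Ber[of "1 - a" "1 - b" \<alpha>] assms by auto
qed

lemma approx_le:
  assumes "0 \<le> a" "a \<le> 1" "0 \<le> a2" "a2 \<le> 1" "0 \<le> b" "b \<le> 1" "0 \<le> b2" "b2 \<le> 1"
    "p = (1 - \<delta>) * a + \<delta> * a2" "q = (1 - \<delta>) * b + \<delta> * b2"
  shows "renyi_approx \<alpha> \<delta> (Ber p) (Ber q) \<le> renyi \<alpha> (Ber a) (Ber b)"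
  unfolding renyi_approx_def
proof (rule Inf_lower, intro CollectI exI conjI)
  show "renyi \<alpha> (Ber a) (Ber b) = renyi \<alpha> (Ber a) (Ber b)" ..
  show "is_pdist (Ber a)" "is_pdist (Ber b)" "is_pdist (Ber a2)" "is_pdist (Ber b2)"
    using assms by (auto intro: is_pdist_Ber)
  show "\<forall>x. Ber p x = (1 - \<delta>) * Ber a x + \<delta> * Ber a2 x"
    "\<forall>x. Ber q x = (1 - \<delta>) * Ber b x + \<delta> * Ber b2 x"
    using assms by (auto simp: Ber_def algebra_simps)
qed

lemma approx_ge:
  assumes d: "0 < \<delta>" "\<delta> < 1"
    and H: "\<And>a b. 0 \<le> a \<Longrightarrow> a \<le> 1 \<Longrightarrow> 0 \<le> b \<Longrightarrow> b \<le> 1 \<Longrightarrow>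
       (1 - \<delta>) * a \<le> p \<Longrightarrow> p - \<delta> \<le> (1 - \<delta>) * a \<Longrightarrow>
       (1 - \<delta>) * b \<le> q \<Longrightarrow> q - \<delta> \<le> (1 - \<delta>) * b \<Longrightarrow> X \<le> renyi \<alpha> (Ber a) (Ber b)"
  shows "X \<le> renyi_approx \<alpha> \<delta> (Ber p) (Ber q)"
  unfolding renyi_approx_def
proof (rule Inf_greatest, clarify)
  fix P' Q' P'' Q''
  assume pd: "is_pdist P'" "is_pdist Q'" "is_pdist P''" "is_pdist Q''"
    and e1: "\<forall>x. Ber p x = (1 - \<delta>) * P' x + \<delta> * P'' x"
    and e2: "\<forall>x. Ber q x = (1 - \<delta>) * Q' x + \<delta> * Q'' x"
  note B = pdist_Ber[OF pd(1)] pdist_Ber[OF pd(2)] pdist_Ber[OF pd(3)] pdist_Ber[OF pd(4)]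
  have p: "p = (1 - \<delta>) * P' True + \<delta> * P'' True" using e1[rule_format, of True] by (simp add: Ber_def)
  have q: "q = (1 - \<delta>) * Q' True + \<delta> * Q'' True" using e2[rule_format, of True] by (simp add: Ber_def)
  have "X \<le> renyi \<alpha> (Ber (P' True)) (Ber (Q' True))"
  proof (rule H)
    show "0 \<le> P' True" "P' True \<le> 1" "0 \<le> Q' True" "Q' True \<le> 1" using B by auto
    have "0 \<le> \<delta> * P'' True" "\<delta> * P'' True \<le> \<delta>" "0 \<le> \<delta> * Q'' True" "\<delta> * Q'' True \<le> \<delta>"
      using B d by (auto intro: mult_left_le)
    then show "(1 - \<delta>) * P' True \<le> p" "p - \<delta> \<le> (1 - \<delta>) * P' True"
      "(1 - \<delta>) * Q' True \<le> q" "q - \<delta> \<le> (1 - \<delta>) * Q' True" using p q by auto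
  qed
  then show "X \<le> renyi \<alpha> P' Q'" using B by metis
qed


lemma renyi_self: assumes "0 \<le> r" "r \<le> 1" shows "renyi \<alpha> (Ber r) (Ber r) = 0"
proof -
  have "KK \<alpha> r r = 1"
  proof -
    have "r powr \<alpha> * r powr (1 - \<alpha>) = r" using assms by (simp add: powr_add[symmetric])
    moreover have "(1 - r) powr \<alpha> * (1 - r) powr (1 - \<alpha>) = 1 - r" using assms by (simp add: powr_add[symmetric])
    ultimately show ?thesis by (simp add: KK_def)
  qed
  then show ?thesis using renyi_Ber[OF assms assms, of \<alpha>] assms by (auto simp: zero_ereal_def)
qed

context
  fixes \<alpha> \<epsilon> \<delta> q :: real
  assumes al: "\<alpha> > 1" and ep: "\<epsilon> > 0" and d0: "0 < \<delta>" and d1: "\<delta> < 1" and q0: "0 \<le> q" and q1: "q \<le> 1"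
begin

definition Fe :: "real \<Rightarrow> bool" where
  "Fe p \<longleftrightarrow> p \<in> {q..1} \<and>
        renyi_approx \<alpha> \<delta> (Ber p) (Ber q) \<le> ereal \<epsilon> \<and>
        renyi_approx \<alpha> \<delta> (Ber q) (Ber p) \<le> ereal \<epsilon>"

lemma Fe_small: assumes "q \<le> p" "p \<le> 1" "p \<le> q + \<delta>" shows "Fe p"
proof -
  define r where "r = max 0 ((p - \<delta>) / (1 - \<delta>))"
  have rr: "(1 - \<delta>) * r = max 0 (p - \<delta>)"
    using d1 divide_nonpos_pos[of "p - \<delta>" "1 - \<delta>"] by (cases "p \<le> \<delta>") (auto simp: r_def max_def)
  have e: "r = max 0 (p - \<delta>) / (1 - \<delta>)" using rr d1 by (auto simp: field_simps)
  have "0 \<le> r" unfolding e using d1 by simp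
  moreover have "r \<le> 1" unfolding e using d1 assms by (simp add: divide_le_eq_1)
  ultimately
  have r: "0 \<le> r" "r \<le> 1" "(1 - \<delta>) * r \<le> q" "p - \<delta> \<le> (1 - \<delta>) * r"
    using rr assms q0 by auto
  define a2 where "a2 = (p - (1 - \<delta>) * r) / \<delta>"
  define b2 where "b2 = (q - (1 - \<delta>) * r) / \<delta>"
  have a2: "0 \<le> a2" "a2 \<le> 1" "p = (1 - \<delta>) * r + \<delta> * a2"
    using r assms d0 by (auto simp: a2_def field_simps)
  have b2: "0 \<le> b2" "b2 \<le> 1" "q = (1 - \<delta>) * r + \<delta> * b2"
    using r assms d0 by (auto simp: b2_def field_simps)
  have "renyi_approx \<alpha> \<delta> (Ber p) (Ber q) \<le> renyi \<alpha> (Ber r) (Ber r)"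
    by (rule approx_le[of r a2 r b2]) (use r a2 b2 in auto)
  moreover have "renyi_approx \<alpha> \<delta> (Ber q) (Ber p) \<le> renyi \<alpha> (Ber r) (Ber r)"
    by (rule approx_le[of r b2 r a2]) (use r a2 b2 in auto)
  ultimately show ?thesis unfolding Fe_def using renyi_self[OF r(1,2), of \<alpha>] ep assms
    by (auto simp: zero_ereal_def order_trans)
qed

lemma Fe_big_iff:
  assumes p: "q + \<delta> < p" "p \<le> 1"
  shows "Fe p \<longleftrightarrow> renyi \<alpha> (Ber ((p - \<delta>) / (1 - \<delta>))) (Ber (q / (1 - \<delta>))) \<le> ereal \<epsilon> \<and>
                  renyi \<alpha> (Ber (q / (1 - \<delta>))) (Ber ((p - \<delta>) / (1 - \<delta>))) \<le> ereal \<epsilon>"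
proof -
  define u where "u = (p - \<delta>) / (1 - \<delta>)"
  define v where "v = q / (1 - \<delta>)"
  have uv0: "0 \<le> v" "u \<le> 1" "(1 - \<delta>) * u = p - \<delta>" "(1 - \<delta>) * v = q"
    using p q0 d0 d1 by (auto simp: u_def v_def field_simps)
  have "v < u" unfolding u_def v_def using p d1 by (intro divide_strict_right_mono) auto
  note uv = uv0 this
  have low1: "renyi \<alpha> (Ber u) (Ber v) \<le> renyi_approx \<alpha> \<delta> (Ber p) (Ber q)"
  proof (rule approx_ge[OF d0 d1])
    fix a b assume h: "0 \<le> a" "a \<le> 1" "0 \<le> b" "b \<le> 1" "(1 - \<delta>) * a \<le> p" "p - \<delta> \<le> (1 - \<delta>) * a"
       "(1 - \<delta>) * b \<le> q" "q - \<delta> \<le> (1 - \<delta>) * b"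
    have "(1 - \<delta>) * u \<le> (1 - \<delta>) * a" "(1 - \<delta>) * b \<le> (1 - \<delta>) * v" using h uv by linarith+
    then have "u \<le> a" "b \<le> v" using d1 by (simp_all add: mult_le_cancel_left_pos)
    then show "renyi \<alpha> (Ber u) (Ber v) \<le> renyi \<alpha> (Ber a) (Ber b)"
      using renyi_mono[OF al, of b v u a] h uv by auto
  qed
  have low2: "renyi \<alpha> (Ber v) (Ber u) \<le> renyi_approx \<alpha> \<delta> (Ber q) (Ber p)"
  proof (rule approx_ge[OF d0 d1])
    fix a b assume h: "0 \<le> a" "a \<le> 1" "0 \<le> b" "b \<le> 1" "(1 - \<delta>) * a \<le> q" "q - \<delta> \<le> (1 - \<delta>) * a"
       "(1 - \<delta>) * b \<le> p" "p - \<delta> \<le> (1 - \<delta>) * b"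
    have "(1 - \<delta>) * a \<le> (1 - \<delta>) * v" "(1 - \<delta>) * u \<le> (1 - \<delta>) * b" using h uv by linarith+
    then have "a \<le> v" "u \<le> b" using d1 by (simp_all add: mult_le_cancel_left_pos)
    then have "renyi \<alpha> (Ber (1 - v)) (Ber (1 - u)) \<le> renyi \<alpha> (Ber (1 - a)) (Ber (1 - b))"
      using renyi_mono[OF al, of "1 - b" "1 - u" "1 - v" "1 - a"] h uv by auto
    then show "renyi \<alpha> (Ber v) (Ber u) \<le> renyi \<alpha> (Ber a) (Ber b)"
      using renyi_swap[of v u \<alpha>] renyi_swap[of a b \<alpha>] h uv by auto
  qed
  have up1: "renyi_approx \<alpha> \<delta> (Ber p) (Ber q) \<le> renyi \<alpha> (Ber u) (Ber v)"
    by (rule approx_le[of u 1 v 0]) (use uv in auto)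
  have up2: "renyi_approx \<alpha> \<delta> (Ber q) (Ber p) \<le> renyi \<alpha> (Ber v) (Ber u)"
    by (rule approx_le[of v 0 u 1]) (use uv in auto)
  show ?thesis unfolding Fe_def u_def[symmetric] v_def[symmetric]
    using low1 low2 up1 up2 p q0 d0 order_trans by (auto intro: order_trans)
qed

lemma H_iff:
  assumes al: "\<alpha> > 1" and v: "0 < v" "v < 1" and u: "0 < u" "u \<le> 1"
  shows "(u \<noteq> 1 \<and> KK \<alpha> v u \<le> C) \<longleftrightarrow>
    v powr \<alpha> * u powr (1 - \<alpha>) * (1 - u) powr (\<alpha> - 1) + (1 - v) powr \<alpha> \<le> C * (1 - u) powr (\<alpha> - 1)"
proof (cases "u = 1")
  case True
  have "(1 - v) powr \<alpha> > 0" using v by simp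
  then show ?thesis using True by simp
next
  case False
  define w where "w = (1 - u) powr (\<alpha> - 1)"
  have w: "w > 0" using False u by (simp add: w_def)
  have "(1 - u) powr (1 - \<alpha>) * w = 1" unfolding w_def using False u by (simp add: powr_add[symmetric])
  then have "KK \<alpha> v u * w = v powr \<alpha> * u powr (1 - \<alpha>) * w + (1 - v) powr \<alpha>"
    unfolding KK_def by (simp add: algebra_simps)
  moreover have "KK \<alpha> v u \<le> C \<longleftrightarrow> KK \<alpha> v u * w \<le> C * w" using w by simp
  ultimately show ?thesis using False by (simp add: w_def)
qed

lemma Fe_max: "\<exists>m. Fe m \<and> (\<forall>p. Fe p \<longrightarrow> p \<le> m)"
proof -
  have Fe_le: "Fe p \<Longrightarrow> q \<le> p \<and> p \<le> 1" for p by (simp add: Fe_def)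
  consider "1 \<le> q + \<delta>" | "q + \<delta> < 1" "q = 0" | "q + \<delta> < 1" "q > 0" using q0 by linarith
  then show ?thesis
  proof cases
    case 1 then show ?thesis using Fe_small[of 1] q1 Fe_le by (intro exI[of _ 1]) auto
  next
    case 2
    have "Fe p \<Longrightarrow> p \<le> \<delta>" for p
    proof (rule ccontr)
      assume a: "Fe p" "\<not> p \<le> \<delta>"
      then have p: "q + \<delta> < p" "p \<le> 1" using 2 Fe_le by auto
      then have "renyi \<alpha> (Ber ((p - \<delta>) / (1 - \<delta>))) (Ber (q / (1 - \<delta>))) \<le> ereal \<epsilon>"
        using Fe_big_iff a(1) by blast
      moreover have "0 < (p - \<delta>) / (1 - \<delta>)" "(p - \<delta>) / (1 - \<delta>) \<le> 1" using p d1 2 by (auto simp: field_simps)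
      ultimately show False using renyi_le_iff[OF al, of "(p - \<delta>) / (1 - \<delta>)" "q / (1 - \<delta>)" \<epsilon>] 2 by auto
    qed
    then show ?thesis using Fe_small[of \<delta>] 2 d0 by (intro exI[of _ \<delta>]) auto
  next
    case 3
    define v where "v = q / (1 - \<delta>)"
    define u where "u = (\<lambda>p. (p - \<delta>) / (1 - \<delta>))"
    define C where "C = exp ((\<alpha> - 1) * \<epsilon>)"
    define I where "I = {q + \<delta>..1}"
    define G where "G = (\<lambda>p. KK \<alpha> (u p) v)"
    define H where "H = (\<lambda>p. v powr \<alpha> * u p powr (1 - \<alpha>) * (1 - u p) powr (\<alpha> - 1) + (1 - v) powr \<alpha>
                              - C * (1 - u p) powr (\<alpha> - 1))"
    have v: "0 < v" "v < 1" using 3 d1 by (auto simp: v_def field_simps)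
    have uI: "v \<le> u p \<and> u p \<le> 1" if "p \<in> I" for p
    proof
      show "v \<le> u p" unfolding u_def v_def using that d1 by (intro divide_right_mono) (auto simp: I_def)
      show "u p \<le> 1" unfolding u_def using that d1 by (auto simp: I_def field_simps)
    qed
    have big: "Fe p \<longleftrightarrow> G p \<le> C \<and> H p \<le> 0" if p: "q + \<delta> < p" "p \<le> 1" for p
    proof -
      have up: "v < u p" "u p \<le> 1" using uI[of p] p unfolding I_def
        using Fe_big_iff[OF p] d1 by (auto simp: u_def v_def intro!: divide_strict_right_mono)
      have "Fe p \<longleftrightarrow> (\<not> ((u p > 0 \<and> v = 0) \<or> (u p < 1 \<and> v = 1)) \<and> KK \<alpha> (u p) v \<le> C) \<and>
                     (\<not> ((v > 0 \<and> u p = 0) \<or> (v < 1 \<and> u p = 1)) \<and> KK \<alpha> v (u p) \<le> C)"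
        using Fe_big_iff[OF p] renyi_le_iff[OF al, of "u p" v \<epsilon>] renyi_le_iff[OF al, of v "u p" \<epsilon>] up v
        unfolding u_def v_def C_def by auto
      also have "\<dots> \<longleftrightarrow> G p \<le> C \<and> (u p \<noteq> 1 \<and> KK \<alpha> v (u p) \<le> C)" using v up by (auto simp: G_def)
      also have "\<dots> \<longleftrightarrow> G p \<le> C \<and> H p \<le> 0" using H_iff[OF al v, of "u p" C] v up by (simp add: H_def)
      finally show ?thesis .
    qed
    define S where "S = {p. Fe p}"
    have S_eq: "S = {q..q + \<delta>} \<union> ((G -` {..C} \<inter> I) \<inter> (H -` {..0} \<inter> I))"
    proof (rule set_eqI)
      fix p show "p \<in> S \<longleftrightarrow> p \<in> {q..q + \<delta>} \<union> ((G -` {..C} \<inter> I) \<inter> (H -` {..0} \<inter> I))"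
      proof (cases "p \<le> q + \<delta>")
        case True
        then show ?thesis using Fe_small[of p] Fe_le[of p] 3 d0 by (auto simp: S_def I_def)
      next
        case False
        then show ?thesis using big[of p] Fe_le[of p] by (auto simp: S_def I_def)
      qed
    qed
    have cont_u: "continuous_on I u" unfolding u_def using d1 by (intro continuous_intros) auto
    have cont_1u: "continuous_on I (\<lambda>p. 1 - u p)" by (intro continuous_on_diff continuous_on_const cont_u)
    have cG: "continuous_on I G" unfolding G_def KK_def
      by (intro continuous_on_add continuous_on_mult continuous_on_powr' continuous_on_const cont_u cont_1u)
        (use uI v al in \<open>force+\<close>)
    have cH: "continuous_on I H" unfolding H_def
      by (intro continuous_on_add continuous_on_diff continuous_on_mult continuous_on_powr' continuous_on_const cont_u cont_1u)
        (use uI v al in fastforce)+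
    have "closed S" unfolding S_eq
      by (intro closed_Un closed_Int closed_vimage_Int cG cH) (auto simp: I_def)
    moreover have "q \<in> S" using Fe_small[of q] q1 d0 by (auto simp: S_def)
    moreover have "bdd_above S" using Fe_le by (auto simp: S_def bdd_above_def)
    ultimately have "Sup S \<in> S" "\<forall>p\<in>S. p \<le> Sup S" using my_closed_contains_Sup[of S] cSup_upper[of _ S] by auto
    then show ?thesis by (auto simp: S_def)
  qed
qed

lemma Lstep_eq: "Fe (Lstep \<alpha> \<epsilon> \<delta> q) \<and> (\<forall>p. Fe p \<longrightarrow> p \<le> Lstep \<alpha> \<epsilon> \<delta> q)"
proof -
  obtain m where m: "Fe m" "\<forall>p. Fe p \<longrightarrow> p \<le> m" using Fe_max by blast
  have "Lstep \<alpha> \<epsilon> \<delta> q = m" unfolding Lstep_def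
    using m by (intro Greatest_equality) (auto simp: Fe_def)
  then show ?thesis using m by simp
qed

lemma Lstep_props: "q \<le> Lstep \<alpha> \<epsilon> \<delta> q" "Lstep \<alpha> \<epsilon> \<delta> q \<le> 1" "min (q + \<delta>) 1 \<le> Lstep \<alpha> \<epsilon> \<delta> q"
proof -
  show "q \<le> Lstep \<alpha> \<epsilon> \<delta> q" "Lstep \<alpha> \<epsilon> \<delta> q \<le> 1" using Lstep_eq by (auto simp: Fe_def)
  have "Fe (min (q + \<delta>) 1)" using Fe_small[of "min (q + \<delta>) 1"] q1 d0 by auto
  then show "min (q + \<delta>) 1 \<le> Lstep \<alpha> \<epsilon> \<delta> q" using Lstep_eq by auto
qed

end

lemma telesc:
  fixes g :: "nat \<Rightarrow> real"
  assumes "m \<le> nd"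
  shows "(\<Sum>x\<in>{x. x < nd \<and> nd \<le> m + x}. g (nd - x) - g (nd - 1 - x)) = g m - g 0"
proof -
  have "(\<Sum>x\<in>{x. x < nd \<and> nd \<le> m + x}. g (nd - x) - g (nd - 1 - x)) = (\<Sum>k<m. g (Suc k) - g k)"
    by (rule sum.reindex_bij_witness[of _ "\<lambda>k. nd - 1 - k" "\<lambda>x. nd - 1 - x"])
      (use assms in \<open>auto simp: Suc_diff_Suc\<close>)
  also have "\<dots> = g m - g 0" by (rule sum_lessThan_telescope)
  finally show ?thesis .
qed

theorem mainTheorem10:
  fixes \<alpha> \<epsilon> \<delta> :: real
  assumes "\<alpha> > 1" and "\<epsilon> > 0" and "0 < \<delta>" and "\<delta> < 1"
  shows "mono (pi_star \<alpha> \<epsilon> \<delta>) \<and>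
         (\<exists>n. pi_star \<alpha> \<epsilon> \<delta> n = 1) \<and>
         (let nd = (LEAST n. pi_star \<alpha> \<epsilon> \<delta> n = 1);
              \<Pi> = (\<lambda>x. pi_star \<alpha> \<epsilon> \<delta> (nd - x) - pi_star \<alpha> \<epsilon> \<delta> (nd - 1 - x));
              \<tau> = nd - 1
          in real nd \<le> of_int \<lceil>1 / \<delta>\<rceil> \<and>
             (\<forall>x\<in>{0..nd - 1}. 0 \<le> \<Pi> x) \<and>
             (\<Sum>x\<in>{0..nd - 1}. \<Pi> x) = 1 \<and>
             (\<forall>n::nat. (\<Sum>x\<in>{x\<in>{0..nd - 1}. n + x > \<tau>}. \<Pi> x) = pi_star \<alpha> \<epsilon> \<delta> n))"
proof -
  define \<pi> where "\<pi> = pi_star \<alpha> \<epsilon> \<delta>"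
  have bnd: "0 \<le> \<pi> n \<and> \<pi> n \<le> 1" for n
  proof (induction n)
    case 0 then show ?case by (simp add: \<pi>_def)
  next
    case (Suc n)
    then show ?case using Lstep_props[OF assms, of "\<pi> n"] by (simp add: \<pi>_def)
  qed
  have step: "\<pi> n \<le> \<pi> (Suc n)" "min (\<pi> n + \<delta>) 1 \<le> \<pi> (Suc n)" for n
    using Lstep_props[OF assms, of "\<pi> n"] bnd[of n] by (simp_all add: \<pi>_def)
  have mono: "mono \<pi>" by (rule mono_iff_le_Suc[THEN iffD2]) (use step in auto)
  have lowb: "min (real n * \<delta>) 1 \<le> \<pi> n" for n
  proof (induction n)
    case 0 then show ?case by (simp add: \<pi>_def)
  next
    case (Suc n)
    have "min (real (Suc n) * \<delta>) 1 \<le> min (\<pi> n + \<delta>) 1" using Suc assms(3) by (auto simp: algebra_simps min_def split: if_splits)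
    then show ?case using step(2)[of n] by linarith
  qed
  define N where "N = nat \<lceil>1 / \<delta>\<rceil>"
  have "1 \<le> real N * \<delta>"
  proof -
    have "1 / \<delta> \<le> real N" unfolding N_def by linarith
    then show ?thesis using assms by (simp add: field_simps)
  qed
  then have piN: "\<pi> N = 1" using lowb[of N] bnd[of N] by linarith
  define nd where "nd = (LEAST n. \<pi> n = 1)"
  have nd1: "\<pi> nd = 1" unfolding nd_def using piN by (rule LeastI)
  have ndN: "nd \<le> N" unfolding nd_def using piN by (rule Least_le)
  have nd0: "nd \<ge> 1" using nd1 by (cases nd) (auto simp: \<pi>_def)
  have after: "n \<ge> nd \<Longrightarrow> \<pi> n = 1" for n using mono nd1 bnd[of n] by (metis monoD order_antisym)
  have A: "real nd \<le> of_int \<lceil>1 / \<delta>\<rceil>"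
  proof -
    have "real nd \<le> real N" using ndN by simp
    also have "real N = of_int \<lceil>1 / \<delta>\<rceil>" unfolding N_def using assms by simp
    finally show ?thesis .
  qed
  have set0: "{0..nd - 1} = {x. x < nd}" using nd0 by auto
  have B: "\<forall>x\<in>{0..nd - 1}. 0 \<le> \<pi> (nd - x) - \<pi> (nd - 1 - x)"
    using mono by (auto simp: monoD)
  have C: "(\<Sum>x\<in>{0..nd - 1}. \<pi> (nd - x) - \<pi> (nd - 1 - x)) = 1"
  proof -
    have "{0..nd - 1} = {x. x < nd \<and> nd \<le> nd + x}" using set0 by auto
    then show ?thesis using telesc[of nd nd \<pi>] nd1 by (simp add: \<pi>_def)
  qed
  have D: "(\<Sum>x\<in>{x\<in>{0..nd - 1}. n + x > nd - 1}. \<pi> (nd - x) - \<pi> (nd - 1 - x)) = \<pi> n" for n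
  proof -
    have "{x\<in>{0..nd - 1}. n + x > nd - 1} = {x. x < nd \<and> nd \<le> min n nd + x}" using nd0 by auto
    then have "(\<Sum>x\<in>{x\<in>{0..nd - 1}. n + x > nd - 1}. \<pi> (nd - x) - \<pi> (nd - 1 - x)) = \<pi> (min n nd) - \<pi> 0"
      using telesc[of "min n nd" nd \<pi>] by simp
    also have "\<dots> = \<pi> n" using after[of n] nd1 by (cases "n \<le> nd") (auto simp: \<pi>_def min_def)
    finally show ?thesis .
  qed
  show ?thesis unfolding Let_def \<pi>_def[symmetric] nd_def[symmetric]
    using mono piN A B C D by blast
qed

end
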